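(* Let $\nu$ be a weight satisfying property (U), let $\mu$ be an arbitrary weight and let $g\in H(\mathbb{D})$. If $$\sup_{0\leq t<1}\ \sup_{0\leq\theta<2\pi}\mu(t)\int_0^t\frac{|g(re^{i\theta})|}{(1-r^2)\nu(r)}\,dr<+\infty\,,$$ then $S_g: H^{\infty}_\nu\rightarrow H^{\infty}_\mu$ is bounded.
   Context: $\mathbb{D}$ is the open unit disk and $H(\mathbb{D})$ the space of analytic functions on $\mathbb{D}$. A weight is a non-negative continuous function $\nu$ on $\mathbb{D}$ with $\nu(z)=\nu(|z|)$ for all $z$, which is decreasing in $|z|$; we write $\nu(r)$ for its value at $|z|=r$. For a weight $\nu$, $H^{\infty}_\nu=\{f\in H(\mathbb{D}): \sup_{z\in\mathbb{D}}\nu(z)|f(z)|<\infty\}$. A weight $\nu$ satisfies property (U) if there is $\alpha>0$ such that $r\mapsto \nu(r)/(1-r^2)^\alpha$ is almost increasing on $[0,1)$ (i.e. there is $C>0$ with $h(r)\le C h(s)$ whenever $r\le s$), equivalently $\inf_n \nu(1-2^{-(n+1)})/\nu(1-2^{-n})>0$. For $g\in H(\mathbb{D})$, $(S_gf)(z)=\int_0^z f'(\omega)g(\omega)\,d\omega$. *)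

theory Defs
  imports "HOL-Complex_Analysis.Complex_Analysis"
begin

text \<open>A weight is represented by its radial profile on [0,1): nu(z) = nu (norm z).\<close>
definition is_weight :: "(real \<Rightarrow> real) \<Rightarrow> bool" where
  "is_weight \<nu> \<longleftrightarrow> (\<forall>r\<in>{0..<1}. 0 \<le> \<nu> r) \<and> continuous_on {0..<1} \<nu> \<and>
     (\<forall>r s. 0 \<le> r \<and> r \<le> s \<and> s < 1 \<longrightarrow> \<nu> s \<le> \<nu> r)"

definition almost_increasing_on :: "real set \<Rightarrow> (real \<Rightarrow> real) \<Rightarrow> bool" where
  "almost_increasing_on A h \<longleftrightarrow> (\<exists>C>0. \<forall>r\<in>A. \<forall>s\<in>A. r \<le> s \<longrightarrow> h r \<le> C * h s)"

definition property_U :: "(real \<Rightarrow> real) \<Rightarrow> bool" where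
  "property_U \<nu> \<longleftrightarrow> (\<exists>\<alpha>>0. almost_increasing_on {0..<1} (\<lambda>r. \<nu> r / (1 - r\<^sup>2) powr \<alpha>))"

definition Hinf :: "(real \<Rightarrow> real) \<Rightarrow> (complex \<Rightarrow> complex) set" where
  "Hinf \<nu> = {f. f holomorphic_on ball 0 1 \<and>
     (\<exists>M. \<forall>z\<in>ball 0 1. \<nu> (norm z) * norm (f z) \<le> M)}"

definition Hinf_norm :: "(real \<Rightarrow> real) \<Rightarrow> (complex \<Rightarrow> complex) \<Rightarrow> real" where
  "Hinf_norm \<nu> f = (SUP z\<in>ball 0 1. \<nu> (norm z) * norm (f z))"

definition S_op :: "(complex \<Rightarrow> complex) \<Rightarrow> (complex \<Rightarrow> complex) \<Rightarrow> complex \<Rightarrow> complex" where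
  "S_op g f z = contour_integral (linepath 0 z) (\<lambda>w. deriv f w * g w)"

definition bounded_Sg :: "(complex \<Rightarrow> complex) \<Rightarrow> (real \<Rightarrow> real) \<Rightarrow> (real \<Rightarrow> real) \<Rightarrow> bool" where
  "bounded_Sg g \<nu> \<mu> \<longleftrightarrow> (\<exists>C. \<forall>f\<in>Hinf \<nu>. S_op g f \<in> Hinf \<mu> \<and>
      Hinf_norm \<mu> (S_op g f) \<le> C * Hinf_norm \<nu> f)"

end

theory Submission
  imports Defs
begin


lemma prim:
  assumes h: "h holomorphic_on ball 0 1" and w: "w \<in> ball (0::complex) 1"
  shows "((\<lambda>z. contour_integral (linepath 0 z) h) has_field_derivative h w) (at w)"
proof -
  have S: "starlike (ball (0::complex) 1)" by (simp add: convex_imp_starlike)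
  have contf: "continuous_on (ball 0 1) h" using h holomorphic_on_imp_continuous_on by blast
  have a_cs: "\<And>x. x \<in> ball 0 1 \<Longrightarrow> closed_segment 0 x \<subseteq> ball (0::complex) 1"
    by (simp add: closed_segment_subset convex_ball)
  { fix b c
    assume "closed_segment b c \<subseteq> ball (0::complex) 1"
    then have abcs: "convex hull {0, b, c} \<subseteq> ball (0::complex) 1"
      proof (intro hull_minimal)
      show "{0, b, c} \<subseteq> ball 0 1" using \<open>closed_segment b c \<subseteq> ball 0 1\<close> ends_in_segment by auto
    qed (simp add: convex_ball)
    then have "continuous_on (convex hull {0, b, c}) h"
      by (simp add: continuous_on_subset [OF contf])
    then have "(h has_contour_integral 0) (linepath 0 b +++ linepath b c +++ linepath c 0)"
      using abcs interior_subset h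
      by (force intro: Cauchy_theorem_triangle_cofinite [where S="{}"] holomorphic_on_imp_differentiable_at)
  } note 0 = this
  show ?thesis
    using 0 a_cs contf has_chain_integral_chain_integral3 w
    by (intro triangle_contour_integrals_starlike_primitive[where S="ball 0 1"]) (force+)
qed

lemma Shol:
  assumes f: "f holomorphic_on ball 0 1" and g: "g holomorphic_on ball 0 1"
  shows "\<And>w. w \<in> ball 0 1 \<Longrightarrow> (S_op g f has_field_derivative deriv f w * g w) (at w)"
    and "S_op g f holomorphic_on ball 0 1"
proof -
  have h: "(\<lambda>w. deriv f w * g w) holomorphic_on ball 0 1"
    using f g by (intro holomorphic_intros holomorphic_deriv) auto
  have eq: "S_op g f = (\<lambda>z. contour_integral (linepath 0 z) (\<lambda>w. deriv f w * g w))"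
    by (rule ext) (simp add: S_op_def)
  show d: "\<And>w. w \<in> ball 0 1 \<Longrightarrow> (S_op g f has_field_derivative deriv f w * g w) (at w)"
    unfolding eq using prim[OF h] by blast
  show "S_op g f holomorphic_on ball 0 1"
    unfolding holomorphic_on_open[OF open_ball] using d by blast
qed

lemma S0: "S_op g f 0 = 0"
  by (simp add: S_op_def)

lemma polar: "z = complex_of_real (norm z) * cis (Arg2pi z)"
  using Arg2pi[of z] by (simp add: is_Arg_def cis_conv_exp)

lemma seg:
  assumes "u \<in> closed_segment 0 z"
  shows "\<exists>r\<in>{0..norm z}. u = complex_of_real r * cis (Arg2pi z)"
proof -
  obtain t where t: "0 \<le> t" "t \<le> 1" "u = t *\<^sub>R z" using assms by (auto simp: in_segment)
  have "u = complex_of_real (t * norm z) * cis (Arg2pi z)"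
    using t(3) polar[of z] by (simp add: scaleR_conv_of_real mult.assoc[symmetric])
  moreover have "t * norm z \<in> {0..norm z}" using t by (auto simp: mult_left_le_one_le)
  ultimately show ?thesis by blast
qed

lemma doubling:
  fixes \<nu> :: "real \<Rightarrow> real"
  assumes \<alpha>: "\<alpha> > 0" and C: "C > 0"
    and U: "\<forall>r\<in>{0..<1}. \<forall>s\<in>{0..<1}. r \<le> s \<longrightarrow> \<nu> r / (1 - r\<^sup>2) powr \<alpha> \<le> C * (\<nu> s / (1 - s\<^sup>2) powr \<alpha>)"
    and nn: "\<forall>r\<in>{0..<1}. 0 \<le> \<nu> r"
    and r: "0 \<le> r" "r < 1"
  shows "\<nu> r \<le> C * 4 powr \<alpha> * \<nu> ((1 + r) / 2)"
proof -
  define s where "s = (1 + r) / 2"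
  have s: "0 \<le> s" "s < 1" "r \<le> s" using r by (auto simp: s_def)
  define a where "a = 1 - r\<^sup>2"
  define b where "b = 1 - s\<^sup>2"
  have a: "a > 0" using r by (simp add: a_def abs_square_less_1)
  have b: "b > 0" using s by (simp add: b_def abs_square_less_1)
  have ab: "a / b \<le> 4"
  proof -
    have e: "4 * b = 3 - 2 * r - r\<^sup>2" by (simp add: b_def s_def power2_eq_square field_simps)
    have "a \<le> 4 * b" unfolding e a_def using r by simp
    then show ?thesis using b by (simp add: divide_le_eq)
  qed
  have h: "\<nu> r / a powr \<alpha> \<le> C * (\<nu> s / b powr \<alpha>)"
    using U s r unfolding a_def b_def by auto
  have "\<nu> r = a powr \<alpha> * (\<nu> r / a powr \<alpha>)" using a by simp
  also have "\<dots> \<le> a powr \<alpha> * (C * (\<nu> s / b powr \<alpha>))"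
    using h a by (intro mult_left_mono) auto
  also have "\<dots> = C * \<nu> s * (a / b) powr \<alpha>"
    using a b by (simp add: powr_divide)
  also have "\<dots> \<le> C * \<nu> s * 4 powr \<alpha>"
    using ab a b \<alpha> C nn s by (intro mult_left_mono powr_mono2) auto
  finally show ?thesis by (simp add: s_def mult_ac)
qed


lemma deriv_est:
  fixes V :: "real \<Rightarrow> real"
  assumes f: "f holomorphic_on ball 0 1" and z: "z \<in> ball 0 1"
    and Vpos: "\<forall>r\<in>{0..<1}. 0 < V r"
    and Vdec: "\<forall>r s. 0 \<le> r \<and> r \<le> s \<and> s < 1 \<longrightarrow> V s \<le> V r"
    and N: "\<forall>x\<in>ball 0 1. V (norm x) * norm (f x) \<le> N"
  shows "norm (deriv f z) \<le> 2 * N / ((1 - norm z) * V ((1 + norm z) / 2))"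
proof -
  define \<rho> where "\<rho> = (1 - norm z) / 2"
  define s where "s = (1 + norm z) / 2"
  have nz: "norm z < 1" using z by simp
  have \<rho>: "\<rho> > 0" using nz by (simp add: \<rho>_def)
  have s: "0 \<le> s" "s < 1" using nz by (auto simp: s_def)
  have Vs: "V s > 0" using Vpos s by auto
  have cb: "cball z \<rho> \<subseteq> ball 0 1"
  proof
    fix x assume "x \<in> cball z \<rho>"
    then have "norm (x - z) \<le> \<rho>" by (simp add: dist_norm norm_minus_commute)
    then have "norm x \<le> norm z + \<rho>" using norm_triangle_ineq[of z "x - z"] by simp
    then have "norm x < 1" using nz unfolding \<rho>_def by (simp add: field_simps)
    then show "x \<in> ball 0 1" by simp
  qed
  have bd: "norm (f x) \<le> N / V s" if "norm (z - x) = \<rho>" for x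
  proof -
    have "norm x \<le> norm z + \<rho>" using that norm_triangle_ineq[of z "x - z"] by (simp add: norm_minus_commute)
    then have xs: "norm x \<le> s" by (simp add: \<rho>_def s_def field_simps)
    have Vx: "V s \<le> V (norm x)" using Vdec xs s by auto
    have xb: "x \<in> ball 0 1" using xs s by simp
    have "V s * norm (f x) \<le> V (norm x) * norm (f x)" using Vx by (simp add: mult_right_mono)
    also have "\<dots> \<le> N" using N xb by blast
    finally show ?thesis using Vs by (simp add: field_simps)
  qed
  have "norm ((deriv ^^ 1) f z) \<le> fact 1 * (N / V s) / \<rho> ^ 1"
    apply (rule Cauchy_inequality[OF _ _ \<rho> bd])
    subgoal using f cb ball_subset_cball by (meson holomorphic_on_subset subset_trans)
    subgoal using f cb by (meson holomorphic_on_imp_continuous_on holomorphic_on_subset)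
    subgoal by assumption
    done
  then show ?thesis by (simp add: \<rho>_def s_def field_simps)
qed



theorem proposition1:
  fixes \<nu> \<mu> :: "real \<Rightarrow> real" and g :: "complex \<Rightarrow> complex"
  assumes "is_weight \<nu>" and "property_U \<nu>" and "is_weight \<mu>"
    and "g holomorphic_on ball 0 1"
    and "(SUP t\<in>{0..<1}. SUP \<theta>\<in>{0..<2*pi}.
           ennreal (\<mu> t) * (\<integral>\<^sup>+ r\<in>{0..t}.
              ennreal (norm (g (complex_of_real r * cis \<theta>))) / ennreal ((1 - r\<^sup>2) * \<nu> r) \<partial>lborel)) < \<infinity>"
  shows "bounded_Sg g \<nu> \<mu>"
proof -
  have nnu: "\<forall>r\<in>{0..<1}. 0 \<le> \<nu> r" and cnu: "continuous_on {0..<1} \<nu>"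
    and dnu: "\<forall>r s. 0 \<le> r \<and> r \<le> s \<and> s < 1 \<longrightarrow> \<nu> s \<le> \<nu> r"
    using assms(1) unfolding is_weight_def by auto
  have nmu: "\<forall>r\<in>{0..<1}. 0 \<le> \<mu> r" using assms(3) unfolding is_weight_def by auto
  obtain \<alpha> C where \<alpha>: "\<alpha> > 0" and C: "C > 0" and U: "\<forall>r\<in>{0..<1}. \<forall>s\<in>{0..<1}. r \<le> s \<longrightarrow> \<nu> r / (1 - r\<^sup>2) powr \<alpha> \<le> C * (\<nu> s / (1 - s\<^sup>2) powr \<alpha>)"
    using assms(2) unfolding property_U_def almost_increasing_on_def by blast
  define Q where "Q = (SUP t\<in>{0..<1}. SUP \<theta>\<in>{0..<2*pi}. ennreal (\<mu> t) * (\<integral>\<^sup>+ r\<in>{0..t}. ennreal (norm (g (complex_of_real r * cis \<theta>))) / ennreal ((1 - r\<^sup>2) * \<nu> r) \<partial>lborel))"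
  have Qfin: "Q < \<infinity>" using assms(5) unfolding Q_def .
  have Qle: "ennreal (\<mu> t) * (\<integral>\<^sup>+ r\<in>{0..t}. ennreal (norm (g (complex_of_real r * cis \<theta>))) / ennreal ((1 - r\<^sup>2) * \<nu> r) \<partial>lborel) \<le> Q"
    if "t \<in> {0..<1}" "\<theta> \<in> {0..<2*pi}" for t \<theta>
    unfolding Q_def using that by (intro SUP_upper2[of t] SUP_upper) auto
  have SH: "\<And>f. f holomorphic_on ball 0 1 \<Longrightarrow> S_op g f holomorphic_on ball 0 1" using Shol(2) assms(4) by blast
  show ?thesis
  proof (cases "\<forall>r\<in>{0..<1}. 0 < \<nu> r")
    case True
    define K where "K = enn2real Q"
    have QK: "Q = ennreal K" using Qfin by (simp add: K_def)
    have K0: "0 \<le> K" by (simp add: K_def)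
    define D where "D = 4 * (C * 4 powr \<alpha>)"
    have D0: "D \<ge> 0" using C by (simp add: D_def)
    show ?thesis unfolding bounded_Sg_def
    proof (intro exI[of _ "D * K"] ballI conjI)
      fix f assume fH: "f \<in> Hinf \<nu>"
      have fhol: "f holomorphic_on ball 0 1" using fH by (simp add: Hinf_def)
      obtain M where M: "\<forall>z\<in>ball 0 1. \<nu> (norm z) * norm (f z) \<le> M" using fH by (auto simp: Hinf_def)
      define N where "N = Hinf_norm \<nu> f"
      have Nb: "\<forall>x\<in>ball 0 1. \<nu> (norm x) * norm (f x) \<le> N"
        unfolding N_def Hinf_norm_def using M by (auto intro!: cSUP_upper bdd_aboveI2)
      have N0: "0 \<le> N"
      proof -
        have "0 \<le> \<nu> (norm (0::complex)) * norm (f 0)" using nnu by simp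
        also have "\<dots> \<le> N" using Nb[rule_format, of 0] by simp
        finally show ?thesis .
      qed
      have fd: "norm (deriv f w) \<le> D * N / ((1 - (norm w)\<^sup>2) * \<nu> (norm w))" if w: "w \<in> ball 0 1" for w
      proof -
        define s where "s = (1 + norm w) / 2"
        have nw: "norm w < 1" using w by simp
        have s: "0 \<le> s" "s < 1" using nw by (auto simp: s_def)
        have e1: "norm (deriv f w) \<le> 2 * N / ((1 - norm w) * \<nu> s)"
          unfolding s_def by (rule deriv_est[OF fhol w True dnu Nb])
        have R: "\<nu> s > 0" using True s by auto
        have P: "\<nu> (norm w) > 0" using True nw by auto
        have X: "1 - norm w > 0" using nw by simp
        have E: "C * 4 powr \<alpha> > 0" using C by simp
        have db: "\<nu> (norm w) \<le> C * 4 powr \<alpha> * \<nu> s"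
          unfolding s_def by (rule doubling[OF \<alpha> C U nnu]) (use nw in auto)
        have e2: "norm (deriv f w) * ((1 - norm w) * \<nu> s) \<le> 2 * N"
          using e1 X R by (simp add: pos_le_divide_eq)
        have w2: "1 - (norm w)\<^sup>2 \<le> 2 * (1 - norm w)"
        proof -
          have "1 - (norm w)\<^sup>2 = (1 - norm w) * (1 + norm w)" by (simp add: power2_eq_square algebra_simps)
          also have "\<dots> \<le> (1 - norm w) * 2" using X nw by (intro mult_left_mono) auto
          finally show ?thesis by simp
        qed
        have "norm (deriv f w) * ((1 - (norm w)\<^sup>2) * \<nu> (norm w))
              \<le> norm (deriv f w) * ((2 * (1 - norm w)) * (C * 4 powr \<alpha> * \<nu> s))"
          using w2 db P X by (intro mult_left_mono mult_mono) auto
        also have "\<dots> = 2 * (C * 4 powr \<alpha>) * (norm (deriv f w) * ((1 - norm w) * \<nu> s))"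
          by (simp add: algebra_simps)
        also have "\<dots> \<le> 2 * (C * 4 powr \<alpha>) * (2 * N)"
          using e2 E by (intro mult_left_mono) auto
        also have "\<dots> = D * N" by (simp add: D_def)
        finally have "norm (deriv f w) * ((1 - (norm w)\<^sup>2) * \<nu> (norm w)) \<le> D * N" .
        moreover have "(1 - (norm w)\<^sup>2) * \<nu> (norm w) > 0"
          using P nw by (simp add: abs_square_less_1)
        ultimately show ?thesis by (simp add: pos_le_divide_eq)
      qed
      have Sb: "\<mu> (norm z) * norm (S_op g f z) \<le> D * K * N" if z: "z \<in> ball 0 1" for z
      proof (cases "z = 0")
        case True then show ?thesis using S0 D0 K0 N0 by simp
      next
        case False
        define s where "s = norm z"
        define \<theta> where "\<theta> = Arg2pi z"
        define e where "e = cis \<theta>"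
        have s: "0 \<le> s" "s < 1" using z by (auto simp: s_def)
        have \<theta>: "\<theta> \<in> {0..<2*pi}" using Arg2pi[of z] by (auto simp: \<theta>_def)
        have ze: "z = of_real s * e" using polar[of z] unfolding s_def e_def \<theta>_def .
        have ne: "norm e = 1" by (simp add: e_def)
        have inb: "of_real r * e \<in> ball 0 1" if "r \<in> {0..s}" for r
          using that s ne by (auto simp: norm_mult)
        have den: "(1 - r\<^sup>2) * \<nu> r > 0" if "r \<in> {0..s}" for r
          using that s True by (auto simp: abs_square_less_1)
        define \<phi> where "\<phi> = (\<lambda>r. norm (g (of_real r * e)) / ((1 - r\<^sup>2) * \<nu> r))"
        have \<phi>0: "0 \<le> \<phi> r" if "r \<in> {0..s}" for r
          using den[OF that] by (simp add: \<phi>_def)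
        have cg: "continuous_on {0..s} (\<lambda>r. g (of_real r * e))"
          by (rule continuous_on_compose2[OF holomorphic_on_imp_continuous_on[OF assms(4)]])
             (auto intro!: continuous_intros inb)
        have cnu': "continuous_on {0..s} \<nu>"
          by (rule continuous_on_subset[OF cnu]) (use s in auto)
        have contphi: "continuous_on {0..s} \<phi>"
        proof -
          have den': "\<forall>r\<in>{0..s}. (1 - r\<^sup>2) * \<nu> r \<noteq> 0" using den by (metis less_irrefl)
          show ?thesis unfolding \<phi>_def by (intro continuous_on_divide continuous_intros cg cnu' den')
        qed
        have intphi: "\<phi> integrable_on {0..s}" by (rule integrable_continuous_interval[OF contphi])
        have der: "((\<lambda>r. S_op g f (of_real r * e)) has_vector_derivative
                     (deriv f (of_real r * e) * g (of_real r * e)) * e) (at r within {0..s})"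
          if r: "r \<in> {0..s}" for r
        proof -
          have "((\<lambda>x. S_op g f (x * e)) has_field_derivative (deriv f (of_real r * e) * g (of_real r * e)) * e) (at (of_real r))"
            by (rule DERIV_chain2[where g="\<lambda>x. x * e" and x="of_real r", OF Shol(1)[OF fhol assms(4) inb[OF r]]])
               (auto intro!: derivative_eq_intros)
          then show ?thesis by (rule has_vector_derivative_real_field)
        qed
        have hi: "((\<lambda>r. (deriv f (of_real r * e) * g (of_real r * e)) * e) has_integral (S_op g f z - S_op g f 0)) {0..s}"
          using fundamental_theorem_of_calculus[OF s(1) der] ze by simp
        have bnd: "norm ((deriv f (of_real r * e) * g (of_real r * e)) * e) \<le> D * N * \<phi> r" if r: "r \<in> {0..s}" for r
        proof -
          have nr: "norm (of_real r * e) = r" using r ne by (auto simp: norm_mult)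
          have "norm ((deriv f (of_real r * e) * g (of_real r * e)) * e) = norm (deriv f (of_real r * e)) * norm (g (of_real r * e))"
            using ne by (simp add: norm_mult)
          also have "\<dots> \<le> D * N / ((1 - r\<^sup>2) * \<nu> r) * norm (g (of_real r * e))"
            using fd[OF inb[OF r]] nr by (intro mult_right_mono) auto
          also have "\<dots> = D * N * \<phi> r" by (simp add: \<phi>_def)
          finally show ?thesis .
        qed
        have eqI: "integral {0..s} (\<lambda>r. (deriv f (of_real r * e) * g (of_real r * e)) * e) = S_op g f z"
          using integral_unique[OF hi] by (simp only: S0 diff_zero)
        have "norm (S_op g f z) = norm (integral {0..s} (\<lambda>r. (deriv f (of_real r * e) * g (of_real r * e)) * e))"
          by (simp only: eqI)
        also have "\<dots> \<le> integral {0..s} (\<lambda>r. D * N * \<phi> r)"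
          by (rule integral_norm_bound_integral[OF has_integral_integrable[OF hi] _ bnd])
             (use integrable_cmul[OF intphi, of "D*N"] in simp_all)
        also have "\<dots> = D * N * integral {0..s} \<phi>" by (rule integral_mult[OF intphi, symmetric])
        finally have I1: "norm (S_op g f z) \<le> D * N * integral {0..s} \<phi>" .
        have I0: "0 \<le> integral {0..s} \<phi>" using intphi \<phi>0 by (intro integral_nonneg) auto
        have nnI: "(\<integral>\<^sup>+ r\<in>{0..s}. ennreal (norm (g (complex_of_real r * cis \<theta>))) / ennreal ((1 - r\<^sup>2) * \<nu> r) \<partial>lborel)
                = ennreal (integral {0..s} \<phi>)"
        proof -
          have "(\<integral>\<^sup>+ r\<in>{0..s}. ennreal (norm (g (complex_of_real r * cis \<theta>))) / ennreal ((1 - r\<^sup>2) * \<nu> r) \<partial>lborel)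
              = (\<integral>\<^sup>+ r. ennreal (\<phi> r) * indicator {0..s} r \<partial>lborel)"
          proof (intro nn_integral_cong)
            fix x :: real
            show "ennreal (norm (g (complex_of_real x * cis \<theta>))) / ennreal ((1 - x\<^sup>2) * \<nu> x) * indicator {0..s} x
                = ennreal (\<phi> x) * indicator {0..s} x"
            proof (cases "x \<in> {0..s}")
              case True
              then show ?thesis using divide_ennreal[OF norm_ge_zero den[OF True]] by (simp add: \<phi>_def e_def)
            qed simp
          qed
          also have "\<dots> = ennreal (integral {0..s} \<phi>)"
            by (rule nn_integral_has_integral_lebesgue'[OF \<phi>0 integrable_integral[OF intphi]])
          finally show ?thesis .
        qed
        have "ennreal (\<mu> s) * ennreal (integral {0..s} \<phi>) \<le> ennreal K"
          using Qle[of s \<theta>] nnI QK s \<theta> by simp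
        then have "ennreal (\<mu> s * integral {0..s} \<phi>) \<le> ennreal K"
          using nmu s I0 by (simp add: ennreal_mult)
        then have I2: "\<mu> s * integral {0..s} \<phi> \<le> K" using K0 by simp
        have mus: "0 \<le> \<mu> s" using nmu s by auto
        have "\<mu> (norm z) * norm (S_op g f z) \<le> \<mu> s * (D * N * integral {0..s} \<phi>)"
          using I1 mus by (simp add: s_def mult_left_mono)
        also have "\<dots> = D * N * (\<mu> s * integral {0..s} \<phi>)" by (simp add: algebra_simps)
        also have "\<dots> \<le> D * N * K" using I2 D0 N0 by (intro mult_left_mono) auto
        finally show ?thesis by (simp add: algebra_simps)
      qed
      show "S_op g f \<in> Hinf \<mu>"
        unfolding Hinf_def using SH[OF fhol] Sb by blast
      show "Hinf_norm \<mu> (S_op g f) \<le> D * K * Hinf_norm \<nu> f"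
        unfolding Hinf_norm_def[of \<mu>] N_def[symmetric] using Sb by (intro cSUP_least) auto
    qed
  next
    case False
    then obtain r0 where r0: "r0 \<in> {0..<1}" "\<not> 0 < \<nu> r0" by blast
    have nur0: "\<nu> r0 = 0" using nnu r0 by force
    have nu0: "\<nu> 0 = 0"
    proof -
      have "\<nu> 0 / (1 - 0\<^sup>2) powr \<alpha> \<le> C * (\<nu> r0 / (1 - r0\<^sup>2) powr \<alpha>)" using U r0(1) by (meson atLeastLessThan_iff order_refl r0(1) atLeastLessThan_iff less_eq_real_def zero_less_one)
      then have "\<nu> 0 \<le> 0" using nur0 by simp
      then show ?thesis using nnu by force
    qed
    have nuz: "\<nu> r = 0" if "r \<in> {0..<1}" for r
    proof -
      have "\<nu> r \<le> \<nu> 0" using dnu that by auto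
      then show ?thesis using nnu that nu0 by force
    qed
    have gz: "g (of_real r * cis \<theta>) = 0"
      if t: "t \<in> {0..<1}" "\<mu> t > 0" "t > 0" "\<theta> \<in> {0..<2*pi}" "r \<in> {0..t}" for t \<theta> r
    proof (rule ccontr)
      assume ne: "g (of_real r * cis \<theta>) \<noteq> 0"
      have rb: "of_real r * cis \<theta> \<in> ball 0 1" using t by (auto simp: norm_mult)
      have cg: "isCont g (of_real r * cis \<theta>)"
        using continuous_on_interior[OF holomorphic_on_imp_continuous_on[OF assms(4)]] rb
        by (simp add: interior_open)
      have "isCont (\<lambda>x. g (of_real x * cis \<theta>)) r"
        by (rule isCont_o2[where f="\<lambda>x. of_real x * cis \<theta>", OF _ cg]) (intro continuous_intros)
      then obtain \<delta> where \<delta>: "\<delta> > 0" "\<And>y. dist r y < \<delta> \<Longrightarrow> g (of_real y * cis \<theta>) \<noteq> 0"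
        using continuous_at_avoid[of r "\<lambda>x. g (of_real x * cis \<theta>)" 0] ne by blast
      define a where "a = max 0 (r - \<delta>/2)"
      define b where "b = min t (r + \<delta>/2)"
      have ab: "a < b" using t \<delta> by (auto simp: a_def b_def)
      have absub: "{a..b} \<subseteq> {0..t}" by (auto simp: a_def b_def)
      have gab: "g (of_real x * cis \<theta>) \<noteq> 0" if "x \<in> {a..b}" for x
      proof -
        have "dist r x < \<delta>" using that \<delta>(1) by (auto simp: a_def b_def dist_real_def)
        then show ?thesis using \<delta>(2) by blast
      qed
      have "top = (\<integral>\<^sup>+ x. top * indicator {a..b} x \<partial>lborel)"
        using ab by (subst nn_integral_cmult_indicator) (auto simp: ennreal_top_mult)
      also have "\<dots> \<le> (\<integral>\<^sup>+ x\<in>{0..t}. ennreal (norm (g (complex_of_real x * cis \<theta>))) / ennreal ((1 - x\<^sup>2) * \<nu> x) \<partial>lborel)"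
      proof (intro nn_integral_mono)
        fix x :: real
        show "top * indicator {a..b} x \<le> ennreal (norm (g (complex_of_real x * cis \<theta>))) / ennreal ((1 - x\<^sup>2) * \<nu> x) * indicator {0..t} x"
        proof (cases "x \<in> {a..b}")
          case True
          then have x0t: "x \<in> {0..t}" using absub by blast
          then have "\<nu> x = 0" using nuz t by auto
          then show ?thesis using True x0t gab[OF True] by simp
        qed simp
      qed
      finally have "(\<integral>\<^sup>+ x\<in>{0..t}. ennreal (norm (g (complex_of_real x * cis \<theta>))) / ennreal ((1 - x\<^sup>2) * \<nu> x) \<partial>lborel) = top"
        by (simp add: top_unique)
      then have "Q = top" using Qle[OF t(1) t(4)] t(2) by (simp add: top_unique)
      then show False using Qfin by simp
    qed
    have SZ: "\<mu> (norm z) * norm (S_op g f z) = 0" if z: "z \<in> ball 0 1" for z f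
    proof (cases "\<mu> (norm z) > 0 \<and> z \<noteq> 0")
      case True
      have "S_op g f z = contour_integral (linepath 0 z) (\<lambda>w. 0)"
        unfolding S_op_def
      proof (rule contour_integral_eq)
        fix u assume "u \<in> path_image (linepath 0 z)"
        then obtain r where r: "r \<in> {0..norm z}" "u = of_real r * cis (Arg2pi z)"
          using seg by (metis path_image_linepath)
        have "g u = 0" unfolding r(2)
          by (rule gz[of "norm z"]) (use z True Arg2pi[of z] r in auto)
        then show "deriv f u * g u = 0" by simp
      qed
      then show ?thesis by simp
    next
      case False
      then show ?thesis using nmu z S0[of g f] by (cases "z = 0") (auto simp: less_le)
    qed
    show ?thesis unfolding bounded_Sg_def
    proof (intro exI[of _ 0] ballI conjI)
      fix f assume fH: "f \<in> Hinf \<nu>"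
      have fhol: "f holomorphic_on ball 0 1" using fH by (simp add: Hinf_def)
      show "S_op g f \<in> Hinf \<mu>"
        unfolding Hinf_def using SH[OF fhol] SZ by force
      have "Hinf_norm \<mu> (S_op g f) \<le> 0"
        unfolding Hinf_norm_def
      proof (rule cSUP_least)
        fix x :: complex assume x: "x \<in> ball 0 1"
        show "\<mu> (norm x) * norm (S_op g f x) \<le> 0" using SZ[OF x, of f] by (rule eq_refl)
      qed simp
      then show "Hinf_norm \<mu> (S_op g f) \<le> 0 * Hinf_norm \<nu> f" by simp
    qed
  qed
qed

end
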